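(* Let $X, Y$ be Polish spaces equipped with Borel probability measures $\mu$ and $\nu$, and let $c: X\times Y\to[0,\infty]$ be Borel measurable. Let $\overline{\Phi}:V\to[0,\infty]$ be the lower semi-continuous envelope of $\Phi$, i.e. the largest function on $V$ that is lower semi-continuous for the norm topology and is dominated by $\Phi$ on $V_+$. Then $\overline{\Phi}(\mathbb{1},\mathbb{1})=P^{\mathrm{rel}}$. Consequently, $\Phi$ is lower semi-continuous at $(\mathbb{1},\mathbb{1})$ if and only if $P=P^{\mathrm{rel}}$.
   Context: Let $W=L^1(\mu)\times L^1(\nu)$ with its product norm. Let $V$ be the subspace of pairs $(f,g)\in W$ with $\int_X f\,d\mu=\int_Y g\,d\nu$. Let $V_+=\{(f,g)\in V: f\ge0,\ g\ge0\}$. For $(f,g)\in V_+$, let $\Pi(f,g)$ be the set of non-negative Borel measures on $X\times Y$ with marginals $f\mu$ and $g\nu$. Define $\Phi(f,g)=\inf\{\int c\,d\pi:\pi\in\Pi(f,g)\}$ for $(f,g)\in V_+$. The symbol $\mathbb{1}$ denotes the constant function $1$. Let $P=\Phi(\mathbb{1},\mathbb{1})=\inf\{\int c\,d\pi : \pi\in\Pi(\mu,\nu)\}$, where $\Pi(\mu,\nu)$ is the set of Borel probability measures on $X\times Y$ with marginals $\mu$ and $\nu$. For $0\le\varepsilon\le1$, let $\Pi^{\varepsilon}(\mu,\nu)$ be the set of non-negative Borel measures $\pi$ on $X\times Y$ with $\pi(X\times Y)\ge1-\varepsilon$, $p_X(\pi)\le\mu$ and $p_Y(\pi)\le\nu$.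 Set $P^{\varepsilon}=\inf\{\int c\,d\pi:\pi\in\Pi^{\varepsilon}(\mu,\nu)\}$ and $P^{\mathrm{rel}}=\lim_{\varepsilon\to0}P^{\varepsilon}$. *)

theory Defs
  imports "HOL-Probability.Probability"
begin

text \<open>Elements of W = L^1(mu) x L^1(nu) are represented by pairs of (representative)
  real functions; the product norm is the sum of the L^1 norms (a seminorm on
  representatives, inducing the norm topology of W).\<close>

definition L1dist :: "'a measure \<Rightarrow> 'b measure \<Rightarrow>
    (('a \<Rightarrow> real) \<times> ('b \<Rightarrow> real)) \<Rightarrow> (('a \<Rightarrow> real) \<times> ('b \<Rightarrow> real)) \<Rightarrow> real" where
  "L1dist \<mu> \<nu> u v =
     (\<integral>x. \<bar>fst u x - fst v x\<bar> \<partial>\<mu>) + (\<integral>y. \<bar>snd u y - snd v y\<bar> \<partial>\<nu>)"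

definition Vset :: "'a measure \<Rightarrow> 'b measure \<Rightarrow> (('a \<Rightarrow> real) \<times> ('b \<Rightarrow> real)) set" where
  "Vset \<mu> \<nu> = {(f, g). integrable \<mu> f \<and> integrable \<nu> g \<and>
                        (\<integral>x. f x \<partial>\<mu>) = (\<integral>y. g y \<partial>\<nu>)}"

definition Vplus :: "'a measure \<Rightarrow> 'b measure \<Rightarrow> (('a \<Rightarrow> real) \<times> ('b \<Rightarrow> real)) set" where
  "Vplus \<mu> \<nu> = {(f, g) \<in> Vset \<mu> \<nu>. (AE x in \<mu>. 0 \<le> f x) \<and> (AE y in \<nu>. 0 \<le> g y)}"

definition couplings :: "'a::topological_space measure \<Rightarrow> 'b::topological_space measure \<Rightarrow>
    ('a \<Rightarrow> real) \<Rightarrow> ('b \<Rightarrow> real) \<Rightarrow> ('a \<times> 'b) measure set" where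
  "couplings \<mu> \<nu> f g = {\<pi>. sets \<pi> = sets borel \<and>
      (\<forall>A \<in> sets borel. emeasure \<pi> (A \<times> UNIV) = (\<integral>\<^sup>+x\<in>A. ennreal (f x) \<partial>\<mu>)) \<and>
      (\<forall>B \<in> sets borel. emeasure \<pi> (UNIV \<times> B) = (\<integral>\<^sup>+y\<in>B. ennreal (g y) \<partial>\<nu>))}"

definition Phi :: "'a::topological_space measure \<Rightarrow> 'b::topological_space measure \<Rightarrow>
    ('a \<times> 'b \<Rightarrow> ennreal) \<Rightarrow> (('a \<Rightarrow> real) \<times> ('b \<Rightarrow> real)) \<Rightarrow> ennreal" where
  "Phi \<mu> \<nu> c v = (INF \<pi> \<in> couplings \<mu> \<nu> (fst v) (snd v). \<integral>\<^sup>+z. c z \<partial>\<pi>)"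

definition lsc_within :: "'v set \<Rightarrow> ('v \<Rightarrow> 'v \<Rightarrow> real) \<Rightarrow> ('v \<Rightarrow> ennreal) \<Rightarrow> 'v \<Rightarrow> bool" where
  "lsc_within S d F v \<longleftrightarrow>
     (\<forall>t < F v. \<exists>\<delta> > 0. \<forall>w \<in> S. d w v < \<delta> \<longrightarrow> t < F w)"

definition Phibar :: "'a::topological_space measure \<Rightarrow> 'b::topological_space measure \<Rightarrow>
    ('a \<times> 'b \<Rightarrow> ennreal) \<Rightarrow> (('a \<Rightarrow> real) \<times> ('b \<Rightarrow> real)) \<Rightarrow> ennreal" where
  "Phibar \<mu> \<nu> c v =
     (SUP F \<in> {F. (\<forall>u \<in> Vset \<mu> \<nu>. lsc_within (Vset \<mu> \<nu>) (L1dist \<mu> \<nu>) F u) \<and>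
                 (\<forall>w \<in> Vplus \<mu> \<nu>. F w \<le> Phi \<mu> \<nu> c w)}. F v)"

definition Pi_eps :: "'a::topological_space measure \<Rightarrow> 'b::topological_space measure \<Rightarrow>
    real \<Rightarrow> ('a \<times> 'b) measure set" where
  "Pi_eps \<mu> \<nu> \<epsilon> = {\<pi>. sets \<pi> = sets borel \<and>
      emeasure \<pi> UNIV \<ge> ennreal (1 - \<epsilon>) \<and>
      (\<forall>A \<in> sets borel. emeasure \<pi> (A \<times> UNIV) \<le> emeasure \<mu> A) \<and>
      (\<forall>B \<in> sets borel. emeasure \<pi> (UNIV \<times> B) \<le> emeasure \<nu> B)}"

definition P_eps :: "'a::topological_space measure \<Rightarrow> 'b::topological_space measure \<Rightarrow>
    ('a \<times> 'b \<Rightarrow> ennreal) \<Rightarrow> real \<Rightarrow> ennreal" where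
  "P_eps \<mu> \<nu> c \<epsilon> = (INF \<pi> \<in> Pi_eps \<mu> \<nu> \<epsilon>. \<integral>\<^sup>+z. c z \<partial>\<pi>)"

definition P_rel :: "'a::topological_space measure \<Rightarrow> 'b::topological_space measure \<Rightarrow>
    ('a \<times> 'b \<Rightarrow> ennreal) \<Rightarrow> ennreal" where
  "P_rel \<mu> \<nu> c = Lim (at_right 0) (P_eps \<mu> \<nu> c)"

end

theory Submission
  imports Defs
begin

lemma fst_borel_meas[measurable]:
  "fst \<in> (borel::('a::second_countable_topology \<times> 'b::second_countable_topology) measure) \<rightarrow>\<^sub>M borel"
  by (intro borel_measurable_continuous_onI continuous_intros)

lemma snd_borel_meas[measurable]:
  "snd \<in> (borel::('a::second_countable_topology \<times> 'b::second_countable_topology) measure) \<rightarrow>\<^sub>M borel"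
  by (intro borel_measurable_continuous_onI continuous_intros)

lemma marg_fst:
  fixes \<pi> :: "('a::polish_space \<times> 'b::polish_space) measure" and \<mu> :: "'a measure"
    and f :: "'a \<Rightarrow> ennreal"
  assumes s\<pi>: "sets \<pi> = sets borel" and s\<mu>: "sets \<mu> = sets borel"
    and f: "f \<in> borel_measurable borel"
    and m: "\<forall>A\<in>sets borel. emeasure \<pi> (A \<times> UNIV) = (\<integral>\<^sup>+x\<in>A. f x \<partial>\<mu>)"
  shows "distr \<pi> borel fst = density \<mu> f"
proof (rule measure_eqI)
  have fm: "fst \<in> \<pi> \<rightarrow>\<^sub>M borel" unfolding measurable_cong_sets[OF s\<pi> refl] by measurable
  have f': "f \<in> borel_measurable \<mu>" using f unfolding measurable_cong_sets[OF s\<mu> refl] .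
  have sp: "space \<pi> = UNIV" using sets_eq_imp_space_eq[OF s\<pi>] by simp
  show "sets (distr \<pi> borel fst) = sets (density \<mu> f)" using s\<mu> by simp
  fix A assume "A \<in> sets (distr \<pi> borel fst)" hence A: "A \<in> sets borel" by simp
  have "fst -` A \<inter> space \<pi> = A \<times> UNIV" by (auto simp: sp)
  then show "emeasure (distr \<pi> borel fst) A = emeasure (density \<mu> f) A"
    using m A by (simp add: emeasure_distr fm emeasure_density f' s\<mu>)
qed

lemma marg_snd:
  fixes \<pi> :: "('a::polish_space \<times> 'b::polish_space) measure" and \<nu> :: "'b measure"
    and g :: "'b \<Rightarrow> ennreal"
  assumes s\<pi>: "sets \<pi> = sets borel" and s\<nu>: "sets \<nu> = sets borel"
    and g: "g \<in> borel_measurable borel"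
    and m: "\<forall>B\<in>sets borel. emeasure \<pi> (UNIV \<times> B) = (\<integral>\<^sup>+y\<in>B. g y \<partial>\<nu>)"
  shows "distr \<pi> borel snd = density \<nu> g"
proof (rule measure_eqI)
  have fm: "snd \<in> \<pi> \<rightarrow>\<^sub>M borel" unfolding measurable_cong_sets[OF s\<pi> refl] by measurable
  have g': "g \<in> borel_measurable \<nu>" using g unfolding measurable_cong_sets[OF s\<nu> refl] .
  have sp: "space \<pi> = UNIV" using sets_eq_imp_space_eq[OF s\<pi>] by simp
  show "sets (distr \<pi> borel snd) = sets (density \<nu> g)" using s\<nu> by simp
  fix A assume "A \<in> sets (distr \<pi> borel snd)" hence A: "A \<in> sets borel" by simp
  have "snd -` A \<inter> space \<pi> = UNIV \<times> A" by (auto simp: sp)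
  then show "emeasure (distr \<pi> borel snd) A = emeasure (density \<nu> g) A"
    using m A by (simp add: emeasure_distr fm emeasure_density g' s\<nu>)
qed

lemma push_fst:
  fixes \<pi> :: "('a::polish_space \<times> 'b::polish_space) measure" and \<mu> :: "'a measure"
    and f :: "'a \<Rightarrow> ennreal"
  assumes s\<pi>: "sets \<pi> = sets borel" and s\<mu>: "sets \<mu> = sets borel"
    and f: "f \<in> borel_measurable borel"
    and m: "\<forall>A\<in>sets borel. emeasure \<pi> (A \<times> UNIV) = (\<integral>\<^sup>+x\<in>A. f x \<partial>\<mu>)"
    and \<phi>: "\<phi> \<in> borel_measurable borel"
  shows "(\<integral>\<^sup>+z. \<phi> (fst z) \<partial>\<pi>) = (\<integral>\<^sup>+x. f x * \<phi> x \<partial>\<mu>)"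
proof -
  have fm: "fst \<in> \<pi> \<rightarrow>\<^sub>M borel" unfolding measurable_cong_sets[OF s\<pi> refl] by measurable
  have f': "f \<in> borel_measurable \<mu>" using f unfolding measurable_cong_sets[OF s\<mu> refl] .
  have \<phi>': "\<phi> \<in> borel_measurable \<mu>" using \<phi> unfolding measurable_cong_sets[OF s\<mu> refl] .
  have "(\<integral>\<^sup>+z. \<phi> (fst z) \<partial>\<pi>) = integral\<^sup>N (distr \<pi> borel fst) \<phi>"
    by (rule nn_integral_distr[symmetric]) (use fm \<phi> in auto)
  also have "\<dots> = integral\<^sup>N (density \<mu> f) \<phi>" using marg_fst[OF assms(1-4)] by simp
  also have "\<dots> = (\<integral>\<^sup>+x. f x * \<phi> x \<partial>\<mu>)" by (rule nn_integral_density[OF f' \<phi>'])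
  finally show ?thesis .
qed

lemma push_snd:
  fixes \<pi> :: "('a::polish_space \<times> 'b::polish_space) measure" and \<nu> :: "'b measure"
    and g :: "'b \<Rightarrow> ennreal"
  assumes s\<pi>: "sets \<pi> = sets borel" and s\<nu>: "sets \<nu> = sets borel"
    and g: "g \<in> borel_measurable borel"
    and m: "\<forall>B\<in>sets borel. emeasure \<pi> (UNIV \<times> B) = (\<integral>\<^sup>+y\<in>B. g y \<partial>\<nu>)"
    and \<phi>: "\<phi> \<in> borel_measurable borel"
  shows "(\<integral>\<^sup>+z. \<phi> (snd z) \<partial>\<pi>) = (\<integral>\<^sup>+x. g x * \<phi> x \<partial>\<nu>)"
proof -
  have fm: "snd \<in> \<pi> \<rightarrow>\<^sub>M borel" unfolding measurable_cong_sets[OF s\<pi> refl] by measurable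
  have g': "g \<in> borel_measurable \<nu>" using g unfolding measurable_cong_sets[OF s\<nu> refl] .
  have \<phi>': "\<phi> \<in> borel_measurable \<nu>" using \<phi> unfolding measurable_cong_sets[OF s\<nu> refl] .
  have "(\<integral>\<^sup>+z. \<phi> (snd z) \<partial>\<pi>) = integral\<^sup>N (distr \<pi> borel snd) \<phi>"
    by (rule nn_integral_distr[symmetric]) (use fm \<phi> in auto)
  also have "\<dots> = integral\<^sup>N (density \<nu> g) \<phi>" using marg_snd[OF assms(1-4)] by simp
  also have "\<dots> = (\<integral>\<^sup>+x. g x * \<phi> x \<partial>\<nu>)" by (rule nn_integral_density[OF g' \<phi>'])
  finally show ?thesis .
qed

lemma envelope:
  fixes d :: "'v \<Rightarrow> 'v \<Rightarrow> real" and \<Phi> :: "'v \<Rightarrow> ennreal"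
  assumes SV: "S \<subseteq> V"
    and tri: "\<And>u v w. u \<in> V \<Longrightarrow> v \<in> V \<Longrightarrow> w \<in> V \<Longrightarrow> d u w \<le> d u v + d v w"
    and refl0: "\<And>w. d w w = 0" and pS: "p \<in> S"
    and E_def: "E = (\<lambda>v. SUP \<delta>\<in>{0<..}. INF w\<in>{w\<in>S. d w v < \<delta>}. \<Phi> w)"
  shows "(SUP F \<in> {F. (\<forall>u\<in>V. lsc_within V d F u) \<and> (\<forall>w\<in>S. F w \<le> \<Phi> w)}. F p) = E p"
    and "lsc_within S d \<Phi> p \<longleftrightarrow> \<Phi> p = E p"
proof -
  have Elsc: "lsc_within V d E u" if u: "u \<in> V" for u
    unfolding lsc_within_def
  proof (intro allI impI)
    fix t assume "t < E u"
    then obtain \<delta> where \<delta>: "\<delta> > 0" and t: "t < (INF w\<in>{w\<in>S. d w u < \<delta>}. \<Phi> w)"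
      unfolding E_def by (auto simp: less_SUP_iff)
    show "\<exists>\<delta>>0. \<forall>w\<in>V. d w u < \<delta> \<longrightarrow> t < E w"
    proof (intro exI[of _ "\<delta>/2"] conjI ballI impI)
      show "0 < \<delta>/2" using \<delta> by simp
      fix w assume w: "w \<in> V" "d w u < \<delta>/2"
      have "(INF w\<in>{w\<in>S. d w u < \<delta>}. \<Phi> w) \<le> (INF w'\<in>{w'\<in>S. d w' w < \<delta>/2}. \<Phi> w')"
      proof (rule INF_superset_mono)
        show "{w' \<in> S. d w' w < \<delta> / 2} \<subseteq> {w \<in> S. d w u < \<delta>}"
        proof safe
          fix w' assume "w' \<in> S" "d w' w < \<delta>/2"
          moreover have "d w' u \<le> d w' w + d w u" using tri[of w' w u] \<open>w' \<in> S\<close> SV w u by auto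
          ultimately show "d w' u < \<delta>" using w by simp
        qed
      qed simp
      also have "\<dots> \<le> E w" unfolding E_def
        by (rule SUP_upper2[of "\<delta>/2"]) (use \<delta> in auto)
      finally show "t < E w" using t by simp
    qed
  qed
  have Ele: "E w \<le> \<Phi> w" if "w \<in> S" for w
    unfolding E_def
    by (rule SUP_least, rule INF_lower2[of w]) (use that refl0 in auto)
  have key: "t \<le> E p" if "\<delta> > 0" "\<And>w. w \<in> S \<Longrightarrow> d w p < \<delta> \<Longrightarrow> t < \<Phi> w" for t \<delta>
  proof -
    have "t \<le> (INF w\<in>{w\<in>S. d w p < \<delta>}. \<Phi> w)"
      by (rule INF_greatest) (use that in \<open>auto intro: less_imp_le\<close>)
    also have "\<dots> \<le> E p" unfolding E_def by (rule SUP_upper) (use that in auto)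
    finally show ?thesis .
  qed
  show "(SUP F \<in> {F. (\<forall>u\<in>V. lsc_within V d F u) \<and> (\<forall>w\<in>S. F w \<le> \<Phi> w)}. F p) = E p"
  proof (rule antisym)
    show "E p \<le> (SUP F \<in> {F. (\<forall>u\<in>V. lsc_within V d F u) \<and> (\<forall>w\<in>S. F w \<le> \<Phi> w)}. F p)"
      by (rule SUP_upper) (use Elsc Ele in auto)
    show "(SUP F \<in> {F. (\<forall>u\<in>V. lsc_within V d F u) \<and> (\<forall>w\<in>S. F w \<le> \<Phi> w)}. F p) \<le> E p"
    proof (rule SUP_least)
      fix G assume G: "G \<in> {F. (\<forall>u\<in>V. lsc_within V d F u) \<and> (\<forall>w\<in>S. F w \<le> \<Phi> w)}"
      show "G p \<le> E p"
      proof (rule dense_le)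
        fix t assume "t < G p"
        with G pS SV obtain \<delta> where "\<delta> > 0" "\<forall>w\<in>V. d w p < \<delta> \<longrightarrow> t < G w"
          unfolding lsc_within_def by blast
        then show "t \<le> E p"
        proof (intro key[of \<delta>])
          fix w assume w: "w \<in> S" "d w p < \<delta>"
          with \<open>\<forall>w\<in>V. d w p < \<delta> \<longrightarrow> t < G w\<close> SV have "t < G w" by blast
          also have "G w \<le> \<Phi> w" using G w by blast
          finally show "t < \<Phi> w" .
        qed simp
      qed
    qed
  qed
  show "lsc_within S d \<Phi> p \<longleftrightarrow> \<Phi> p = E p"
  proof
    assume L: "lsc_within S d \<Phi> p"
    show "\<Phi> p = E p"
    proof (rule antisym)
      show "E p \<le> \<Phi> p" using Ele pS .
      show "\<Phi> p \<le> E p"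
      proof (rule dense_le)
        fix t assume "t < \<Phi> p"
        with L obtain \<delta> where "\<delta> > 0" "\<forall>w\<in>S. d w p < \<delta> \<longrightarrow> t < \<Phi> w"
          unfolding lsc_within_def by blast
        then show "t \<le> E p" by (intro key[of \<delta>]) auto
      qed
    qed
  next
    assume eq: "\<Phi> p = E p"
    show "lsc_within S d \<Phi> p" unfolding lsc_within_def
    proof (intro allI impI)
      fix t assume "t < \<Phi> p"
      then obtain \<delta> where \<delta>: "\<delta> > 0" and t: "t < (INF w\<in>{w\<in>S. d w p < \<delta>}. \<Phi> w)"
        unfolding eq E_def by (auto simp: less_SUP_iff)
      show "\<exists>\<delta>>0. \<forall>w\<in>S. d w p < \<delta> \<longrightarrow> t < \<Phi> w"
        using \<delta> t by (auto simp: less_INF_D)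
    qed
  qed
qed

lemma L1_tri:
  assumes "u \<in> Vset \<mu> \<nu>" "v \<in> Vset \<mu> \<nu>" "w \<in> Vset \<mu> \<nu>"
  shows "L1dist \<mu> \<nu> u w \<le> L1dist \<mu> \<nu> u v + L1dist \<mu> \<nu> v w"
proof -
  obtain f1 g1 f2 g2 f3 g3 where e: "u = (f1,g1)" "v = (f2,g2)" "w = (f3,g3)" by (cases u, cases v, cases w) auto
  have i: "integrable \<mu> f1" "integrable \<mu> f2" "integrable \<mu> f3"
          "integrable \<nu> g1" "integrable \<nu> g2" "integrable \<nu> g3"
    using assms unfolding e Vset_def by auto
  have a: "(\<integral>x. \<bar>f1 x - f3 x\<bar> \<partial>\<mu>) \<le> (\<integral>x. \<bar>f1 x - f2 x\<bar> \<partial>\<mu>) + (\<integral>x. \<bar>f2 x - f3 x\<bar> \<partial>\<mu>)"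
  proof -
    have "(\<integral>x. \<bar>f1 x - f3 x\<bar> \<partial>\<mu>) \<le> (\<integral>x. \<bar>f1 x - f2 x\<bar> + \<bar>f2 x - f3 x\<bar> \<partial>\<mu>)"
      by (rule integral_mono) (use i in auto)
    also have "\<dots> = (\<integral>x. \<bar>f1 x - f2 x\<bar> \<partial>\<mu>) + (\<integral>x. \<bar>f2 x - f3 x\<bar> \<partial>\<mu>)"
      by (rule Bochner_Integration.integral_add) (use i in auto)
    finally show ?thesis .
  qed
  have b: "(\<integral>x. \<bar>g1 x - g3 x\<bar> \<partial>\<nu>) \<le> (\<integral>x. \<bar>g1 x - g2 x\<bar> \<partial>\<nu>) + (\<integral>x. \<bar>g2 x - g3 x\<bar> \<partial>\<nu>)"
  proof -
    have "(\<integral>x. \<bar>g1 x - g3 x\<bar> \<partial>\<nu>) \<le> (\<integral>x. \<bar>g1 x - g2 x\<bar> + \<bar>g2 x - g3 x\<bar> \<partial>\<nu>)"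
      by (rule integral_mono) (use i in auto)
    also have "\<dots> = (\<integral>x. \<bar>g1 x - g2 x\<bar> \<partial>\<nu>) + (\<integral>x. \<bar>g2 x - g3 x\<bar> \<partial>\<nu>)"
      by (rule Bochner_Integration.integral_add) (use i in auto)
    finally show ?thesis .
  qed
  show ?thesis using a b unfolding e L1dist_def by simp
qed

lemma P_eps_anti:
  assumes "e1 \<le> e2"
  shows "P_eps \<mu> \<nu> c e2 \<le> P_eps \<mu> \<nu> c e1"
  unfolding P_eps_def
proof (rule INF_superset_mono)
  show "Pi_eps \<mu> \<nu> e1 \<subseteq> Pi_eps \<mu> \<nu> e2"
  proof -
    have "ennreal (1-e2) \<le> ennreal (1-e1)" by (rule ennreal_leI) (use assms in simp)
    then show ?thesis unfolding Pi_eps_def by (auto intro: order_trans)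
  qed
qed simp

lemma P_rel_SUP: "P_rel \<mu> \<nu> c = (SUP \<epsilon>\<in>{0<..}. P_eps \<mu> \<nu> c \<epsilon>)"
proof -
  define L where "L = (SUP \<epsilon>\<in>{0<..}. P_eps \<mu> \<nu> c \<epsilon>)"
  have "(P_eps \<mu> \<nu> c \<longlongrightarrow> L) (at_right 0)"
  proof (rule order_tendstoI)
    fix a assume "a < L"
    then obtain e0 where e0: "e0 > 0" "a < P_eps \<mu> \<nu> c e0" unfolding L_def by (auto simp: less_SUP_iff)
    show "\<forall>\<^sub>F x in at_right 0. a < P_eps \<mu> \<nu> c x"
      unfolding eventually_at_right[OF e0(1)]
      by (intro exI[of _ e0]) (use e0 in \<open>auto intro: less_le_trans[OF e0(2) P_eps_anti]\<close>)
  next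
    fix a assume "L < a"
    show "\<forall>\<^sub>F x in at_right 0. P_eps \<mu> \<nu> c x < a"
      using eventually_at_right_less[of "0::real"]
    proof eventually_elim
      case (elim x)
      have "P_eps \<mu> \<nu> c x \<le> L" unfolding L_def by (rule SUP_upper) (use elim in auto)
      then show ?case using \<open>L < a\<close> by simp
    qed
  qed
  then have "Lim (at_right 0) (P_eps \<mu> \<nu> c) = L" by (intro tendsto_Lim) auto
  then show ?thesis unfolding P_rel_def L_def by simp
qed

lemma marginal_density:
  fixes \<mu> :: "'a::polish_space measure" and N :: "'a measure"
  assumes P: "prob_space \<mu>" and s\<mu>: "sets \<mu> = sets borel" and sN: "sets N = sets borel"
    and le: "\<forall>A\<in>sets borel. emeasure N A \<le> emeasure \<mu> A"
  shows "\<exists>f. f \<in> borel_measurable borel \<and> (\<forall>x. 0 \<le> f x \<and> f x \<le> 1) \<and>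
             N = density \<mu> (\<lambda>x. ennreal (f x))"
proof -
  interpret prob_space \<mu> by (rule P)
  have ac: "absolutely_continuous \<mu> N"
    unfolding absolutely_continuous_def
  proof
    fix A assume "A \<in> null_sets \<mu>"
    then have A: "A \<in> sets borel" "emeasure \<mu> A = 0" using s\<mu> by (auto simp: null_sets_def)
    then have "emeasure N A \<le> 0" using le by force
    then show "A \<in> null_sets N" using A sN by (auto simp: null_sets_def)
  qed
  obtain f' where f'm: "f' \<in> borel_measurable \<mu>" and Nd: "density \<mu> f' = N"
    using Radon_Nikodym[OF ac] sN s\<mu> by auto
  have f'b: "f' \<in> borel_measurable borel" using f'm unfolding measurable_cong_sets[OF s\<mu> refl] .
  define A where "A = {x. 1 < f' x}"
  have A: "A \<in> sets borel" unfolding A_def using f'b by measurable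
  have Aleq: "AE x in \<mu>. f' x * indicator A x \<le> indicator A x"
  proof (rule ccontr)
    assume nAE: "\<not> (AE x in \<mu>. f' x * indicator A x \<le> indicator A x)"
    have "(\<integral>\<^sup>+x. indicator A x \<partial>\<mu>) < (\<integral>\<^sup>+x. f' x * indicator A x \<partial>\<mu>)"
    proof (rule nn_integral_less)
      show "indicator A \<in> borel_measurable \<mu>" using A s\<mu> by simp
      show "(\<lambda>x. f' x * indicator A x) \<in> borel_measurable \<mu>" using A s\<mu> f'm by simp
      show "(\<integral>\<^sup>+x. indicator A x \<partial>\<mu>) \<noteq> \<infinity>" using A s\<mu> by simp
      show "AE x in \<mu>. indicator A x \<le> f' x * indicator A x"
        by (auto simp: A_def indicator_def less_imp_le)
      show "\<not> (AE x in \<mu>. f' x * indicator A x \<le> indicator A x)" by (rule nAE)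
    qed
    also have "\<dots> = emeasure N A" unfolding Nd[symmetric] using A s\<mu> f'm by (simp add: emeasure_density)
    also have "\<dots> \<le> emeasure \<mu> A" using le A by simp
    finally show False using A s\<mu> by simp
  qed
  have AE1: "AE x in \<mu>. f' x \<le> 1"
    using Aleq
  proof eventually_elim
    case (elim x)
    show ?case
    proof (cases "1 < f' x")
      case True
      then show ?thesis using elim by (simp add: A_def indicator_def)
    qed (simp add: not_less)
  qed
  define f where "f x = enn2real (min (f' x) 1)" for x
  have fb: "f \<in> borel_measurable borel" unfolding f_def using f'b by measurable
  have f01: "\<forall>x. 0 \<le> f x \<and> f x \<le> 1"
  proof
    fix x
    have "min (f' x) 1 \<le> 1" by simp
    then have "enn2real (min (f' x) 1) \<le> enn2real 1" by (intro enn2real_mono) auto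
    then show "0 \<le> f x \<and> f x \<le> 1" unfolding f_def by simp
  qed
  have ef: "ennreal (f x) = min (f' x) 1" for x
    unfolding f_def by (intro ennreal_enn2real) (auto simp: min_def intro: le_less_trans[of _ 1])
  have "density \<mu> f' = density \<mu> (\<lambda>x. ennreal (f x))"
  proof (rule density_cong)
    show "f' \<in> borel_measurable \<mu>" by (rule f'm)
    show "(\<lambda>x. ennreal (f x)) \<in> borel_measurable \<mu>"
      using fb unfolding measurable_cong_sets[OF s\<mu> refl] by measurable
    show "AE x in \<mu>. f' x = ennreal (f x)"
      using AE1 by eventually_elim (simp add: ef min_def)
  qed
  then show ?thesis using fb f01 Nd by auto
qed

lemma density_facts:
  fixes \<mu> :: "'a::polish_space measure" and f :: "'a \<Rightarrow> real"
  assumes P: "prob_space \<mu>" and s\<mu>: "sets \<mu> = sets borel"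
    and fb: "f \<in> borel_measurable borel" and f01: "\<forall>x. 0 \<le> f x \<and> f x \<le> 1"
  shows "integrable \<mu> f" "ennreal (\<integral>x. f x \<partial>\<mu>) = emeasure (density \<mu> (\<lambda>x. ennreal (f x))) UNIV"
    "(\<integral>x. \<bar>f x - 1\<bar> \<partial>\<mu>) = 1 - (\<integral>x. f x \<partial>\<mu>)"
proof -
  interpret prob_space \<mu> by (rule P)
  have fm: "f \<in> borel_measurable \<mu>" using fb unfolding measurable_cong_sets[OF s\<mu> refl] .
  show i: "integrable \<mu> f"
    by (rule integrable_const_bound[where B=1]) (use f01 fm in auto)
  have sp: "space \<mu> = UNIV" using sets_eq_imp_space_eq[OF s\<mu>] by simp
  have "emeasure (density \<mu> (\<lambda>x. ennreal (f x))) UNIV = (\<integral>\<^sup>+x. ennreal (f x) \<partial>\<mu>)"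
    using fm sp s\<mu> by (subst emeasure_density) (auto simp: sp)
  also have "\<dots> = ennreal (\<integral>x. f x \<partial>\<mu>)"
    by (rule nn_integral_eq_integral) (use i f01 in auto)
  finally show "ennreal (\<integral>x. f x \<partial>\<mu>) = emeasure (density \<mu> (\<lambda>x. ennreal (f x))) UNIV" by simp
  have "(\<integral>x. \<bar>f x - 1\<bar> \<partial>\<mu>) = (\<integral>x. 1 - f x \<partial>\<mu>)"
    by (rule Bochner_Integration.integral_cong) (use f01 in auto)
  also have "\<dots> = (\<integral>x. 1 \<partial>\<mu>) - (\<integral>x. f x \<partial>\<mu>)"
    by (rule Bochner_Integration.integral_diff) (use i in auto)
  also have "(\<integral>x. 1 \<partial>\<mu>) = (1::real)" by (simp add: prob_space)
  finally show "(\<integral>x. \<bar>f x - 1\<bar> \<partial>\<mu>) = 1 - (\<integral>x. f x \<partial>\<mu>)" .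
qed

lemma upper_construct:
  fixes \<mu> :: "'a::polish_space measure" and \<nu> :: "'b::polish_space measure"
    and \<pi> :: "('a \<times> 'b) measure"
  assumes P\<mu>: "prob_space \<mu>" and s\<mu>: "sets \<mu> = sets borel"
    and P\<nu>: "prob_space \<nu>" and s\<nu>: "sets \<nu> = sets borel"
    and \<pi>: "\<pi> \<in> Pi_eps \<mu> \<nu> \<epsilon>"
  shows "\<exists>w\<in>Vplus \<mu> \<nu>. L1dist \<mu> \<nu> w (\<lambda>_. 1, \<lambda>_. 1) \<le> 2 * \<epsilon> \<and>
           \<pi> \<in> couplings \<mu> \<nu> (fst w) (snd w)"
proof -
  have s\<pi>: "sets \<pi> = sets borel" and mass: "ennreal (1 - \<epsilon>) \<le> emeasure \<pi> UNIV"
    and m1: "\<forall>A\<in>sets borel. emeasure \<pi> (A \<times> UNIV) \<le> emeasure \<mu> A"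
    and m2: "\<forall>B\<in>sets borel. emeasure \<pi> (UNIV \<times> B) \<le> emeasure \<nu> B"
    using \<pi> unfolding Pi_eps_def by auto
  have sp: "space \<pi> = UNIV" using sets_eq_imp_space_eq[OF s\<pi>] by simp
  have fm: "fst \<in> \<pi> \<rightarrow>\<^sub>M borel" unfolding measurable_cong_sets[OF s\<pi> refl] by measurable
  have sm: "snd \<in> \<pi> \<rightarrow>\<^sub>M borel" unfolding measurable_cong_sets[OF s\<pi> refl] by measurable
  have d1: "emeasure (distr \<pi> borel fst) A = emeasure \<pi> (A \<times> UNIV)" if "A \<in> sets borel" for A
  proof -
    have "fst -` A \<inter> space \<pi> = A \<times> UNIV" by (auto simp: sp)
    then show ?thesis using that fm by (simp add: emeasure_distr)
  qed
  have d2: "emeasure (distr \<pi> borel snd) B = emeasure \<pi> (UNIV \<times> B)" if "B \<in> sets borel" for B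
  proof -
    have "snd -` B \<inter> space \<pi> = UNIV \<times> B" by (auto simp: sp)
    then show ?thesis using that sm by (simp add: emeasure_distr)
  qed
  obtain f where fb: "f \<in> borel_measurable borel" and f01: "\<forall>x. 0 \<le> f x \<and> f x \<le> 1"
    and fd: "distr \<pi> borel fst = density \<mu> (\<lambda>x. ennreal (f x))"
    using marginal_density[OF P\<mu> s\<mu>, of "distr \<pi> borel fst"] d1 m1 by auto
  obtain g where gb: "g \<in> borel_measurable borel" and g01: "\<forall>x. 0 \<le> g x \<and> g x \<le> 1"
    and gd: "distr \<pi> borel snd = density \<nu> (\<lambda>x. ennreal (g x))"
    using marginal_density[OF P\<nu> s\<nu>, of "distr \<pi> borel snd"] d2 m2 by auto
  note F = density_facts[OF P\<mu> s\<mu> fb f01]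
  note G = density_facts[OF P\<nu> s\<nu> gb g01]
  have intf: "ennreal (\<integral>x. f x \<partial>\<mu>) = emeasure \<pi> UNIV"
    using F(2) d1[of UNIV] by (simp add: fd[symmetric])
  have intg: "ennreal (\<integral>x. g x \<partial>\<nu>) = emeasure \<pi> UNIV"
    using G(2) d2[of UNIV] by (simp add: gd[symmetric])
  have fnn: "0 \<le> (\<integral>x. f x \<partial>\<mu>)" using f01 by (simp add: integral_nonneg)
  have gnn: "0 \<le> (\<integral>x. g x \<partial>\<nu>)" using g01 by (simp add: integral_nonneg)
  have eq: "(\<integral>x. f x \<partial>\<mu>) = (\<integral>x. g x \<partial>\<nu>)"
    using intf intg fnn gnn by (metis ennreal_inj)
  have fge: "1 - \<epsilon> \<le> (\<integral>x. f x \<partial>\<mu>)"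
  proof -
    have "ennreal (1 - \<epsilon>) \<le> ennreal (\<integral>x. f x \<partial>\<mu>)" using mass intf by simp
    then show ?thesis using fnn by (simp add: ennreal_le_iff)
  qed
  have Vp: "(f, g) \<in> Vplus \<mu> \<nu>"
    unfolding Vplus_def Vset_def using F(1) G(1) eq f01 g01 by auto
  have dist: "L1dist \<mu> \<nu> (f, g) (\<lambda>_. 1, \<lambda>_. 1) \<le> 2 * \<epsilon>"
    unfolding L1dist_def using F(3) G(3) eq fge by simp
  have fbm: "f \<in> borel_measurable \<mu>" using fb unfolding measurable_cong_sets[OF s\<mu> refl] .
  have gbm: "g \<in> borel_measurable \<nu>" using gb unfolding measurable_cong_sets[OF s\<nu> refl] .
  have cp: "\<pi> \<in> couplings \<mu> \<nu> f g"
    unfolding couplings_def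
  proof (intro CollectI conjI ballI)
    show "sets \<pi> = sets borel" by (rule s\<pi>)
  next
    fix A :: "'a set" assume A: "A \<in> sets borel"
    have "emeasure \<pi> (A \<times> UNIV) = emeasure (density \<mu> (\<lambda>x. ennreal (f x))) A"
      using d1[OF A] by (simp add: fd[symmetric])
    also have "\<dots> = (\<integral>\<^sup>+x\<in>A. ennreal (f x) \<partial>\<mu>)"
      using A fbm s\<mu> by (simp add: emeasure_density)
    finally show "emeasure \<pi> (A \<times> UNIV) = (\<integral>\<^sup>+x\<in>A. ennreal (f x) \<partial>\<mu>)" .
  next
    fix B :: "'b set" assume B: "B \<in> sets borel"
    have "emeasure \<pi> (UNIV \<times> B) = emeasure (density \<nu> (\<lambda>x. ennreal (g x))) B"
      using d2[OF B] by (simp add: gd[symmetric])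
    also have "\<dots> = (\<integral>\<^sup>+x\<in>B. ennreal (g x) \<partial>\<nu>)"
      using B gbm s\<nu> by (simp add: emeasure_density)
    finally show "emeasure \<pi> (UNIV \<times> B) = (\<integral>\<^sup>+x\<in>B. ennreal (g x) \<partial>\<nu>)" .
  qed
  show ?thesis using Vp dist cp by (intro bexI[of _ "(f, g)"]) auto
qed

lemma ea_prod: "ennreal t * ennreal (if 1 < t then 1 / t else 1) = ennreal (min t 1)"
proof (cases "1 < t")
  case True
  then have "ennreal t * ennreal (1/t) = ennreal (t * (1/t))" by (subst ennreal_mult') auto
  also have "t * (1/t) = 1" using True by simp
  finally have *: "ennreal t * ennreal (1/t) = 1" by simp
  show ?thesis using True * by simp
qed (simp add: min_def)

lemma ea_01: "0 \<le> (if 1 < (t::real) then 1 / t else 1) \<and> (if 1 < t then 1 / t else 1) \<le> 1"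
  by auto

lemma lower_construct:
  fixes \<mu> :: "'a::polish_space measure" and \<nu> :: "'b::polish_space measure"
    and \<pi> :: "('a \<times> 'b) measure" and c :: "'a \<times> 'b \<Rightarrow> ennreal"
  assumes P\<mu>: "prob_space \<mu>" and s\<mu>: "sets \<mu> = sets borel"
    and P\<nu>: "prob_space \<nu>" and s\<nu>: "sets \<nu> = sets borel"
    and cb: "c \<in> borel_measurable borel"
    and w: "(f, g) \<in> Vplus \<mu> \<nu>" and \<pi>: "\<pi> \<in> couplings \<mu> \<nu> f g"
    and dl: "L1dist \<mu> \<nu> (f, g) (\<lambda>_. 1, \<lambda>_. 1) < \<delta>"
  shows "P_eps \<mu> \<nu> c \<delta> \<le> (\<integral>\<^sup>+z. c z \<partial>\<pi>)"
proof -
  interpret M: prob_space \<mu> by (rule P\<mu>)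
  interpret N: prob_space \<nu> by (rule P\<nu>)
  have fi: "integrable \<mu> f" and gi: "integrable \<nu> g" and eq: "(\<integral>x. f x \<partial>\<mu>) = (\<integral>y. g y \<partial>\<nu>)"
    and fnn: "AE x in \<mu>. 0 \<le> f x" and gnn: "AE y in \<nu>. 0 \<le> g y"
    using w unfolding Vplus_def Vset_def by auto
  have s\<pi>: "sets \<pi> = sets borel"
    and m1: "\<forall>A\<in>sets borel. emeasure \<pi> (A \<times> UNIV) = (\<integral>\<^sup>+x\<in>A. ennreal (f x) \<partial>\<mu>)"
    and m2: "\<forall>B\<in>sets borel. emeasure \<pi> (UNIV \<times> B) = (\<integral>\<^sup>+y\<in>B. ennreal (g y) \<partial>\<nu>)"
    using \<pi> unfolding couplings_def by auto
  have sp: "space \<pi> = UNIV" using sets_eq_imp_space_eq[OF s\<pi>] by simp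
  have fb: "f \<in> borel_measurable borel"
    using borel_measurable_integrable[OF fi] unfolding measurable_cong_sets[OF s\<mu> refl] .
  have gb: "g \<in> borel_measurable borel"
    using borel_measurable_integrable[OF gi] unfolding measurable_cong_sets[OF s\<nu> refl] .
  define a where "a x = (if 1 < f x then 1 / f x else 1)" for x
  define b where "b y = (if 1 < g y then 1 / g y else 1)" for y
  have ab: "0 \<le> a x" "a x \<le> 1" "0 \<le> b y" "b y \<le> 1" for x y
    unfolding a_def b_def using ea_01 by blast+
  have ab_b: "a \<in> borel_measurable borel" "b \<in> borel_measurable borel"
    unfolding a_def b_def using fb gb by measurable
  define h where "h z = a (fst z) * b (snd z)" for z
  have h01: "0 \<le> h z" "h z \<le> 1" for z
    unfolding h_def using ab by (auto intro: mult_le_one)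
  have hb: "(\<lambda>z. ennreal (h z)) \<in> borel_measurable \<pi>"
    unfolding measurable_cong_sets[OF s\<pi> refl] h_def using ab_b by measurable
  have cpi: "c \<in> borel_measurable \<pi>" using cb unfolding measurable_cong_sets[OF s\<pi> refl] .
  define \<pi>' where "\<pi>' = density \<pi> (\<lambda>z. ennreal (h z))"
  have fa: "ennreal (f x) * ennreal (a x) = ennreal (min (f x) 1)" for x
    unfolding a_def by (rule ea_prod)
  have gb': "ennreal (g y) * ennreal (b y) = ennreal (min (g y) 1)" for y
    unfolding b_def by (rule ea_prod)
  have efb: "(\<lambda>x. ennreal (f x)) \<in> borel_measurable borel" using fb by measurable
  have egb: "(\<lambda>x. ennreal (g x)) \<in> borel_measurable borel" using gb by measurable
  note PF = push_fst[OF s\<pi> s\<mu> efb m1]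
  note PS = push_snd[OF s\<pi> s\<nu> egb m2]
  have marg1: "emeasure \<pi>' (A \<times> UNIV) \<le> emeasure \<mu> A" if A: "A \<in> sets borel" for A
  proof -
    have AU: "A \<times> UNIV \<in> sets \<pi>"
    proof -
      have "fst -` A \<inter> space borel \<in> sets (borel :: ('a \<times> 'b) measure)"
        by (rule measurable_sets[OF fst_borel_meas A])
      moreover have "fst -` A \<inter> space borel = (A \<times> UNIV :: ('a \<times> 'b) set)" by auto
      ultimately show ?thesis using s\<pi> by simp
    qed
    have "emeasure \<pi>' (A \<times> UNIV) = (\<integral>\<^sup>+z. ennreal (h z) * indicator (A \<times> UNIV) z \<partial>\<pi>)"
      unfolding \<pi>'_def using hb AU by (simp add: emeasure_density)
    also have "\<dots> \<le> (\<integral>\<^sup>+z. ennreal (a (fst z)) * indicator A (fst z) \<partial>\<pi>)"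
    proof (rule nn_integral_mono)
      fix z :: "'a \<times> 'b"
      have "ennreal (h z) \<le> ennreal (a (fst z))"
        unfolding h_def using ab by (intro ennreal_leI mult_left_le) auto
      moreover have "indicator (A \<times> UNIV) z = (indicator A (fst z) :: ennreal)"
        by (cases z) (simp add: indicator_def)
      ultimately show "ennreal (h z) * indicator (A \<times> UNIV) z \<le> ennreal (a (fst z)) * indicator A (fst z)"
        by (simp add: mult_right_mono)
    qed
    also have "\<dots> = (\<integral>\<^sup>+x. ennreal (f x) * (ennreal (a x) * indicator A x) \<partial>\<mu>)"
      by (rule PF) (use ab_b A in measurable)
    also have "\<dots> \<le> (\<integral>\<^sup>+x. indicator A x \<partial>\<mu>)"
    proof (rule nn_integral_mono)
      fix x
      have "ennreal (f x) * (ennreal (a x) * indicator A x) = ennreal (min (f x) 1) * indicator A x"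
        by (simp add: fa mult.assoc[symmetric])
      also have "\<dots> \<le> 1 * indicator A x" by (intro mult_right_mono) auto
      finally show "ennreal (f x) * (ennreal (a x) * indicator A x) \<le> indicator A x" by simp
    qed
    also have "\<dots> = emeasure \<mu> A" using A s\<mu> by simp
    finally show ?thesis .
  qed
  have marg2: "emeasure \<pi>' (UNIV \<times> B) \<le> emeasure \<nu> B" if B: "B \<in> sets borel" for B
  proof -
    have UB: "UNIV \<times> B \<in> sets \<pi>"
    proof -
      have "snd -` B \<inter> space borel \<in> sets (borel :: ('a \<times> 'b) measure)"
        by (rule measurable_sets[OF snd_borel_meas B])
      moreover have "snd -` B \<inter> space borel = (UNIV \<times> B :: ('a \<times> 'b) set)" by auto
      ultimately show ?thesis using s\<pi> by simp
    qed
    have "emeasure \<pi>' (UNIV \<times> B) = (\<integral>\<^sup>+z. ennreal (h z) * indicator (UNIV \<times> B) z \<partial>\<pi>)"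
      unfolding \<pi>'_def using hb UB by (simp add: emeasure_density)
    also have "\<dots> \<le> (\<integral>\<^sup>+z. ennreal (b (snd z)) * indicator B (snd z) \<partial>\<pi>)"
    proof (rule nn_integral_mono)
      fix z :: "'a \<times> 'b"
      have "ennreal (h z) \<le> ennreal (b (snd z))"
        unfolding h_def using ab by (intro ennreal_leI mult_left_le_one_le) auto
      moreover have "indicator (UNIV \<times> B) z = (indicator B (snd z) :: ennreal)"
        by (cases z) (simp add: indicator_def)
      ultimately show "ennreal (h z) * indicator (UNIV \<times> B) z \<le> ennreal (b (snd z)) * indicator B (snd z)"
        by (simp add: mult_right_mono)
    qed
    also have "\<dots> = (\<integral>\<^sup>+x. ennreal (g x) * (ennreal (b x) * indicator B x) \<partial>\<nu>)"
      by (rule PS) (use ab_b B in measurable)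
    also have "\<dots> \<le> (\<integral>\<^sup>+x. indicator B x \<partial>\<nu>)"
    proof (rule nn_integral_mono)
      fix x
      have "ennreal (g x) * (ennreal (b x) * indicator B x) = ennreal (min (g x) 1) * indicator B x"
        by (simp add: gb' mult.assoc[symmetric])
      also have "\<dots> \<le> 1 * indicator B x" by (intro mult_right_mono) auto
      finally show "ennreal (g x) * (ennreal (b x) * indicator B x) \<le> indicator B x" by simp
    qed
    also have "\<dots> = emeasure \<nu> B" using B s\<nu> by simp
    finally show ?thesis .
  qed
  have mass: "ennreal (1 - \<delta>) \<le> emeasure \<pi>' UNIV"
  proof -
    have UNIVs: "UNIV \<in> sets \<pi>" using sets.top[of \<pi>] sp by simp
    have em: "emeasure \<pi>' UNIV = (\<integral>\<^sup>+z. ennreal (h z) \<partial>\<pi>)"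
      unfolding \<pi>'_def using hb UNIVs by (subst emeasure_density) auto
    define A where "A = (\<integral>x. min (f x) 1 \<partial>\<mu>)"
    define B where "B = (\<integral>y. min (g y) 1 \<partial>\<nu>)"
    define M where "M = (\<integral>x. f x \<partial>\<mu>)"
    define df where "df = (\<integral>x. \<bar>f x - 1\<bar> \<partial>\<mu>)"
    define dg where "dg = (\<integral>y. \<bar>g y - 1\<bar> \<partial>\<nu>)"
    have iA: "integrable \<mu> (\<lambda>x. min (f x) 1)" using fi by (intro integrable_min) auto
    have iB: "integrable \<nu> (\<lambda>x. min (g x) 1)" using gi by (intro integrable_min) auto
    have A0: "0 \<le> A" unfolding A_def by (rule integral_nonneg_AE) (use fnn in auto)
    have B0: "0 \<le> B" unfolding B_def by (rule integral_nonneg_AE) (use gnn in auto)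
    have M0: "0 \<le> M" unfolding M_def by (rule integral_nonneg_AE) (use fnn in auto)
    have intA: "(\<integral>\<^sup>+z. ennreal (a (fst z)) \<partial>\<pi>) = ennreal A"
    proof -
      have "(\<integral>\<^sup>+z. ennreal (a (fst z)) \<partial>\<pi>) = (\<integral>\<^sup>+x. ennreal (f x) * ennreal (a x) \<partial>\<mu>)"
        by (rule PF) (use ab_b in measurable)
      also have "\<dots> = (\<integral>\<^sup>+x. ennreal (min (f x) 1) \<partial>\<mu>)" by (simp add: fa)
      also have "\<dots> = ennreal A" unfolding A_def
        by (rule nn_integral_eq_integral[OF iA]) (use fnn in auto)
      finally show ?thesis .
    qed
    have intB: "(\<integral>\<^sup>+z. ennreal (b (snd z)) \<partial>\<pi>) = ennreal B"
    proof -
      have "(\<integral>\<^sup>+z. ennreal (b (snd z)) \<partial>\<pi>) = (\<integral>\<^sup>+x. ennreal (g x) * ennreal (b x) \<partial>\<nu>)"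
        by (rule PS) (use ab_b in measurable)
      also have "\<dots> = (\<integral>\<^sup>+x. ennreal (min (g x) 1) \<partial>\<nu>)" by (simp add: gb')
      also have "\<dots> = ennreal B" unfolding B_def
        by (rule nn_integral_eq_integral[OF iB]) (use gnn in auto)
      finally show ?thesis .
    qed
    have piU: "emeasure \<pi> UNIV = ennreal M"
    proof -
      have "emeasure \<pi> UNIV = emeasure \<pi> (UNIV \<times> UNIV)" by simp
      also have "\<dots> = (\<integral>\<^sup>+x. ennreal (f x) \<partial>\<mu>)" using m1[rule_format, of UNIV] by simp
      also have "\<dots> = ennreal M" unfolding M_def
        by (rule nn_integral_eq_integral[OF fi]) (use fnn in auto)
      finally show ?thesis .
    qed
    have am: "(\<lambda>z. ennreal (a (fst z))) \<in> borel_measurable \<pi>"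
      unfolding measurable_cong_sets[OF s\<pi> refl] using ab_b by measurable
    have bm: "(\<lambda>z. ennreal (b (snd z))) \<in> borel_measurable \<pi>"
      unfolding measurable_cong_sets[OF s\<pi> refl] using ab_b by measurable
    have ineq: "ennreal A + ennreal B \<le> (\<integral>\<^sup>+z. ennreal (h z) \<partial>\<pi>) + ennreal M"
    proof -
      have "ennreal A + ennreal B = (\<integral>\<^sup>+z. ennreal (a (fst z)) + ennreal (b (snd z)) \<partial>\<pi>)"
        using intA intB by (subst nn_integral_add) (use am bm in auto)
      also have "\<dots> \<le> (\<integral>\<^sup>+z. ennreal (h z) + 1 \<partial>\<pi>)"
      proof (rule nn_integral_mono)
        fix z
        have r: "a (fst z) + b (snd z) \<le> h z + 1"
        proof -
          have "0 \<le> (1 - a (fst z)) * (1 - b (snd z))" using ab by (intro mult_nonneg_nonneg) auto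
          then show ?thesis unfolding h_def by (simp add: algebra_simps)
        qed
        have "ennreal (a (fst z)) + ennreal (b (snd z)) = ennreal (a (fst z) + b (snd z))"
          using ab by (simp add: ennreal_plus)
        also have "\<dots> \<le> ennreal (h z + 1)" by (rule ennreal_leI[OF r])
        also have "\<dots> = ennreal (h z) + 1" using h01 by (simp add: ennreal_plus)
        finally show "ennreal (a (fst z)) + ennreal (b (snd z)) \<le> ennreal (h z) + 1" .
      qed
      also have "\<dots> = (\<integral>\<^sup>+z. ennreal (h z) \<partial>\<pi>) + (\<integral>\<^sup>+z. 1 \<partial>\<pi>)"
        by (rule nn_integral_add) (use hb in auto)
      also have "(\<integral>\<^sup>+z. 1 \<partial>\<pi>) = ennreal M" using piU sp by simp
      finally show ?thesis .
    qed
    have Hle: "(\<integral>\<^sup>+z. ennreal (h z) \<partial>\<pi>) \<le> ennreal M"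
    proof -
      have "(\<integral>\<^sup>+z. ennreal (h z) \<partial>\<pi>) \<le> (\<integral>\<^sup>+z. 1 \<partial>\<pi>)"
        by (rule nn_integral_mono) (use h01 in auto)
      then show ?thesis using piU sp by simp
    qed
    define r where "r = enn2real (\<integral>\<^sup>+z. ennreal (h z) \<partial>\<pi>)"
    have Hr: "(\<integral>\<^sup>+z. ennreal (h z) \<partial>\<pi>) = ennreal r"
      unfolding r_def using Hle by (intro ennreal_enn2real[symmetric] le_less_trans[OF Hle]) simp
    have r0: "0 \<le> r" unfolding r_def by simp
    have ABr: "A + B \<le> r + M"
    proof -
      have "ennreal (A + B) \<le> ennreal (r + M)"
        using ineq A0 B0 r0 M0 unfolding Hr by (simp add: ennreal_plus)
      moreover have "0 \<le> r + M" using r0 M0 by simp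
      ultimately show ?thesis using ennreal_le_iff by blast
    qed
    have Ad: "1 - df \<le> A"
    proof -
      have "(\<integral>x. 1 - \<bar>f x - 1\<bar> \<partial>\<mu>) \<le> A" unfolding A_def
        by (rule integral_mono) (use fi iA in auto)
      moreover have "(\<integral>x. 1 - \<bar>f x - 1\<bar> \<partial>\<mu>) = (\<integral>x. 1 \<partial>\<mu>) - df"
        unfolding df_def by (rule Bochner_Integration.integral_diff) (use fi in auto)
      moreover have "(\<integral>x. 1 \<partial>\<mu>) = (1::real)" by (simp add: M.prob_space)
      ultimately show ?thesis by simp
    qed
    have Bd: "M - dg \<le> B"
    proof -
      have "(\<integral>x. g x - \<bar>g x - 1\<bar> \<partial>\<nu>) \<le> B" unfolding B_def
        by (rule integral_mono) (use gi iB in auto)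
      moreover have "(\<integral>x. g x - \<bar>g x - 1\<bar> \<partial>\<nu>) = (\<integral>x. g x \<partial>\<nu>) - dg"
        unfolding dg_def by (rule Bochner_Integration.integral_diff) (use gi in auto)
      ultimately show ?thesis using eq unfolding M_def by simp
    qed
    have dd: "df + dg < \<delta>" using dl unfolding L1dist_def df_def dg_def by simp
    have "1 - \<delta> \<le> r" using ABr Ad Bd dd by simp
    then have "ennreal (1 - \<delta>) \<le> ennreal r" by (rule ennreal_leI)
    then show ?thesis using em Hr by simp
  qed
  have cost: "(\<integral>\<^sup>+z. c z \<partial>\<pi>') \<le> (\<integral>\<^sup>+z. c z \<partial>\<pi>)"
  proof -
    have "(\<integral>\<^sup>+z. c z \<partial>\<pi>') = (\<integral>\<^sup>+z. ennreal (h z) * c z \<partial>\<pi>)"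
      unfolding \<pi>'_def by (rule nn_integral_density[OF hb cpi])
    also have "\<dots> \<le> (\<integral>\<^sup>+z. c z \<partial>\<pi>)"
    proof (rule nn_integral_mono)
      fix z
      have "ennreal (h z) * c z \<le> 1 * c z" using h01 by (intro mult_right_mono) auto
      then show "ennreal (h z) * c z \<le> c z" by simp
    qed
    finally show ?thesis .
  qed
  have "\<pi>' \<in> Pi_eps \<mu> \<nu> \<delta>"
    unfolding Pi_eps_def using marg1 marg2 mass s\<pi> by (auto simp: \<pi>'_def)
  then have "P_eps \<mu> \<nu> c \<delta> \<le> (\<integral>\<^sup>+z. c z \<partial>\<pi>')" unfolding P_eps_def by (rule INF_lower)
  then show ?thesis using cost by simp
qed

theorem proposition2p3:
  fixes \<mu> :: "'a::polish_space measure" and \<nu> :: "'b::polish_space measure"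
    and c :: "'a \<times> 'b \<Rightarrow> ennreal"
  assumes "prob_space \<mu>" and "sets \<mu> = sets borel"
    and "prob_space \<nu>" and "sets \<nu> = sets borel"
    and "c \<in> borel_measurable borel"
  shows "Phibar \<mu> \<nu> c (\<lambda>_. 1, \<lambda>_. 1) = P_rel \<mu> \<nu> c \<and>
         (lsc_within (Vplus \<mu> \<nu>) (L1dist \<mu> \<nu>) (Phi \<mu> \<nu> c) (\<lambda>_. 1, \<lambda>_. 1)
            \<longleftrightarrow> Phi \<mu> \<nu> c (\<lambda>_. 1, \<lambda>_. 1) = P_rel \<mu> \<nu> c)"
proof -
  note A = assms
  interpret M: prob_space \<mu> by (rule A(1))
  interpret N: prob_space \<nu> by (rule A(3))
  define p :: "('a \<Rightarrow> real) \<times> ('b \<Rightarrow> real)" where "p = (\<lambda>_. 1, \<lambda>_. 1)"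
  define E where "E = (\<lambda>v. SUP \<delta>\<in>{0<..}. INF w\<in>{w\<in>Vplus \<mu> \<nu>. L1dist \<mu> \<nu> w v < \<delta>}. Phi \<mu> \<nu> c w)"
  have SV: "Vplus \<mu> \<nu> \<subseteq> Vset \<mu> \<nu>" unfolding Vplus_def by auto
  have refl0: "L1dist \<mu> \<nu> w w = 0" for w unfolding L1dist_def by simp
  have pS: "p \<in> Vplus \<mu> \<nu>"
    unfolding p_def Vplus_def Vset_def by (auto simp: M.prob_space N.prob_space)
  note env = envelope[OF SV L1_tri refl0 pS E_def]
  have EP: "E p = P_rel \<mu> \<nu> c"
  proof (rule antisym)
    show "E p \<le> P_rel \<mu> \<nu> c"
      unfolding E_def P_rel_SUP
    proof (rule SUP_least)
      fix \<delta> :: real assume \<delta>: "\<delta> \<in> {0<..}"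
      have "(INF w\<in>{w\<in>Vplus \<mu> \<nu>. L1dist \<mu> \<nu> w p < \<delta>}. Phi \<mu> \<nu> c w) \<le> P_eps \<mu> \<nu> c (\<delta>/4)"
        unfolding P_eps_def
      proof (rule INF_greatest)
        fix \<pi> assume \<pi>: "\<pi> \<in> Pi_eps \<mu> \<nu> (\<delta>/4)"
        obtain w where w: "w \<in> Vplus \<mu> \<nu>" "L1dist \<mu> \<nu> w p \<le> 2 * (\<delta>/4)"
          "\<pi> \<in> couplings \<mu> \<nu> (fst w) (snd w)"
          using upper_construct[OF A(1-4) \<pi>] unfolding p_def by blast
        have "(INF w\<in>{w\<in>Vplus \<mu> \<nu>. L1dist \<mu> \<nu> w p < \<delta>}. Phi \<mu> \<nu> c w) \<le> Phi \<mu> \<nu> c w"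
          by (rule INF_lower) (use w \<delta> in auto)
        also have "\<dots> \<le> (\<integral>\<^sup>+z. c z \<partial>\<pi>)" unfolding Phi_def by (rule INF_lower) (use w in auto)
        finally show "(INF w\<in>{w\<in>Vplus \<mu> \<nu>. L1dist \<mu> \<nu> w p < \<delta>}. Phi \<mu> \<nu> c w) \<le> (\<integral>\<^sup>+z. c z \<partial>\<pi>)" .
      qed
      also have "\<dots> \<le> (SUP \<epsilon>\<in>{0<..}. P_eps \<mu> \<nu> c \<epsilon>)" by (rule SUP_upper) (use \<delta> in auto)
      finally show "(INF w\<in>{w\<in>Vplus \<mu> \<nu>. L1dist \<mu> \<nu> w p < \<delta>}. Phi \<mu> \<nu> c w) \<le> (SUP \<epsilon>\<in>{0<..}. P_eps \<mu> \<nu> c \<epsilon>)" .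
    qed
    show "P_rel \<mu> \<nu> c \<le> E p"
      unfolding P_rel_SUP
    proof (rule SUP_least)
      fix \<epsilon> :: real assume \<epsilon>: "\<epsilon> \<in> {0<..}"
      have "P_eps \<mu> \<nu> c \<epsilon> \<le> (INF w\<in>{w\<in>Vplus \<mu> \<nu>. L1dist \<mu> \<nu> w p < \<epsilon>}. Phi \<mu> \<nu> c w)"
      proof (rule INF_greatest)
        fix w assume w: "w \<in> {w\<in>Vplus \<mu> \<nu>. L1dist \<mu> \<nu> w p < \<epsilon>}"
        obtain f g where fg: "w = (f, g)" by (cases w)
        show "P_eps \<mu> \<nu> c \<epsilon> \<le> Phi \<mu> \<nu> c w"
          unfolding Phi_def
        proof (rule INF_greatest)
          fix \<pi> assume "\<pi> \<in> couplings \<mu> \<nu> (fst w) (snd w)"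
          then show "P_eps \<mu> \<nu> c \<epsilon> \<le> (\<integral>\<^sup>+z. c z \<partial>\<pi>)"
            using w unfolding fg p_def by (intro lower_construct[OF A]) auto
        qed
      qed
      also have "\<dots> \<le> E p" unfolding E_def by (rule SUP_upper) (use \<epsilon> in auto)
      finally show "P_eps \<mu> \<nu> c \<epsilon> \<le> E p" .
    qed
  qed
  have 1: "Phibar \<mu> \<nu> c p = P_rel \<mu> \<nu> c" unfolding Phibar_def using env(1) EP by simp
  have 2: "lsc_within (Vplus \<mu> \<nu>) (L1dist \<mu> \<nu>) (Phi \<mu> \<nu> c) p \<longleftrightarrow> Phi \<mu> \<nu> c p = P_rel \<mu> \<nu> c"
    using env(2) EP by simp
  show ?thesis using 1 2 unfolding p_def by simp
qed

end
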